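(* Let $B=(V,E,>)$ be a non-elementary $k$-simple ordered Bratteli diagram with $k\ge2$, and let $L_n$ denote its transition graph at level $n$. If $L_n$ has an edge $v_1$ whose source is the vertex $Y_i$, then there is a closed walk $(v_1,\dots,v_l)$ in $L_n$ starting with $v_1$, i.e., a directed walk whose last edge $v_l$ has range $Y_i$.
   Context: Bratteli diagram: vertex sets $V^0=\{v_0\},V^1,\dots$, edge sets $E^n$ with $s(E^n)=V^n$, $r(E^n)=V^{n+1}$; $w$ at level $m$ is connected to $v$ at level $n<m$ if a finite path goes from $v$ to $w$. $k$-simple: for each $n\ge1$ pairwise disjoint $V^n_1,\dots,V^n_k\subseteq V^n$ with (i) $s(r^{-1}(v))\subseteq V^n_i$ for $v\in V^{n+1}_i$; (ii) for all $i,n$ some $m>n$ with every vertex of $V^m_i$ connected to every vertex of $V^n_i$. $V^n_o:=V^n\setminus\bigcup_iV^n_i$. Non-elementary: for every $n$ there is $m>n$ with the number of paths between any vertex of $V^n_o$ and any vertex of $V^m_o$ equal to $0$ or $\ge2$. An order is a linear order on each $r^{-1}(v)$, extended lexicographically to finite paths with common range; $e+1$ is the successor; $E_{\max},E_{\min}$, $X_{\max},X_{\min}$ are maximal/minimal edges and infinite paths. $k$-simple ordered: (1) $(V,E)$ $k$-simple; (2) infinite paths $z_{i,\max},z_{i,\min}$ with level-$n$ vertices in $V^n_i$, and $X_{\max}=\{z_{i,\max}\}_{i}$, $X_{\min}=\{z_{i,\min}\}_i$; there is $L$ such that for $n\ge L$, $v\in V^n_o$, the maximal (resp. minimal) path from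 $v_0$ to $v$ passes at level $1$ through $V^1_i$, written $m_+(v)=i$ (resp. $m_-(v)=i$); (3) for $v\in V^n_o$: (a) every edge $e$ with $s(e)=v$ satisfies $m_-(s(e+1))=m_+(v)$ (for maximal $e$, $s(e+1)$ means the level-$n$ source of the successor of a non-maximal finite path beginning with $e$); (b) if $e\notin E_{\max}$, $r(e)=v$, $s(e)\in V^{n-1}_i$, $n\ge3$, then $m_-(s(e+1))=i$. The transition graph $L_n$ (for $n\ge\max(2,L)$) is the directed multigraph with vertices $Y_1,\dots,Y_k$ and, for each $v\in V^n_o$, one edge labelled $v$ from $Y_{m_-(v)}$ to $Y_{m_+(v)}$. *)

theory Defs
  imports Main
begin

text \<open>The order is a relation ord: (e, e') in ord means e < e'
 (only meaningful for edges with the same range).\<close>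

definition bratteli :: "(nat \<Rightarrow> 'v set) \<Rightarrow> (nat \<Rightarrow> 'e set) \<Rightarrow> ('e \<Rightarrow> 'v) \<Rightarrow> ('e \<Rightarrow> 'v) \<Rightarrow> bool" where
  "bratteli V E s r \<longleftrightarrow>
     (\<exists>v0. V 0 = {v0}) \<and>
     (\<forall>n. finite (V n) \<and> finite (E n) \<and> s ` E n = V n \<and> r ` E n = V (Suc n)) \<and>
     (\<forall>n m. n \<noteq> m \<longrightarrow> V n \<inter> V m = {})"

definition fpath :: "(nat \<Rightarrow> 'e set) \<Rightarrow> ('e \<Rightarrow> 'v) \<Rightarrow> ('e \<Rightarrow> 'v) \<Rightarrow> nat \<Rightarrow> 'e list \<Rightarrow> bool" where
  "fpath E s r n p \<longleftrightarrow>
     (\<forall>j<length p. p ! j \<in> E (n + j)) \<and>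
     (\<forall>j. Suc j < length p \<longrightarrow> r (p ! j) = s (p ! Suc j))"

definition paths_between :: "(nat \<Rightarrow> 'e set) \<Rightarrow> ('e \<Rightarrow> 'v) \<Rightarrow> ('e \<Rightarrow> 'v) \<Rightarrow> nat \<Rightarrow> nat \<Rightarrow> 'v \<Rightarrow> 'v \<Rightarrow> 'e list set" where
  "paths_between E s r n m v w =
     {p. fpath E s r n p \<and> length p = m - n \<and> p \<noteq> [] \<and> s (hd p) = v \<and> r (last p) = w}"

definition connected :: "(nat \<Rightarrow> 'e set) \<Rightarrow> ('e \<Rightarrow> 'v) \<Rightarrow> ('e \<Rightarrow> 'v) \<Rightarrow> nat \<Rightarrow> nat \<Rightarrow> 'v \<Rightarrow> 'v \<Rightarrow> bool" where
  "connected E s r n m v w \<longleftrightarrow> n < m \<and> paths_between E s r n m v w \<noteq> {}"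

definition is_order :: "(nat \<Rightarrow> 'v set) \<Rightarrow> (nat \<Rightarrow> 'e set) \<Rightarrow> ('e \<Rightarrow> 'v) \<Rightarrow> 'e rel \<Rightarrow> bool" where
  "is_order V E r ord \<longleftrightarrow>
     (\<forall>n v. v \<in> V (Suc n) \<longrightarrow>
        (let A = {e \<in> E n. r e = v} in strict_linear_order_on A (ord \<inter> (A \<times> A))))"

definition emax :: "(nat \<Rightarrow> 'e set) \<Rightarrow> ('e \<Rightarrow> 'v) \<Rightarrow> 'e rel \<Rightarrow> nat \<Rightarrow> 'e \<Rightarrow> bool" where
  "emax E r ord n e \<longleftrightarrow> e \<in> E n \<and> (\<forall>e'\<in>E n. r e' = r e \<longrightarrow> (e, e') \<notin> ord)"

definition emin :: "(nat \<Rightarrow> 'e set) \<Rightarrow> ('e \<Rightarrow> 'v) \<Rightarrow> 'e rel \<Rightarrow> nat \<Rightarrow> 'e \<Rightarrow> bool" where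
  "emin E r ord n e \<longleftrightarrow> e \<in> E n \<and> (\<forall>e'\<in>E n. r e' = r e \<longrightarrow> (e', e) \<notin> ord)"

text \<open>lexicographic order on paths of equal length (compare at the highest differing edge)\<close>
definition plex :: "'e rel \<Rightarrow> 'e list \<Rightarrow> 'e list \<Rightarrow> bool" where
  "plex ord p q \<longleftrightarrow> length p = length q \<and>
     (\<exists>k<length p. (p ! k, q ! k) \<in> ord \<and> (\<forall>j. k < j \<and> j < length p \<longrightarrow> p ! j = q ! j))"

definition is_succ :: "(nat \<Rightarrow> 'e set) \<Rightarrow> ('e \<Rightarrow> 'v) \<Rightarrow> ('e \<Rightarrow> 'v) \<Rightarrow> 'e rel \<Rightarrow> nat \<Rightarrow> 'e list \<Rightarrow> 'e list \<Rightarrow> bool" where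
  "is_succ E s r ord n p q \<longleftrightarrow>
     fpath E s r n p \<and> fpath E s r n q \<and> p \<noteq> [] \<and> length q = length p \<and>
     r (last q) = r (last p) \<and> plex ord p q \<and>
     \<not> (\<exists>u. fpath E s r n u \<and> length u = length p \<and> r (last u) = r (last p) \<and>
            plex ord p u \<and> plex ord u q)"

definition max_through :: "(nat \<Rightarrow> 'v set) \<Rightarrow> (nat \<Rightarrow> 'e set) \<Rightarrow> ('e \<Rightarrow> 'v) \<Rightarrow> ('e \<Rightarrow> 'v) \<Rightarrow> 'e rel \<Rightarrow> (nat \<Rightarrow> nat \<Rightarrow> 'v set) \<Rightarrow> 'v \<Rightarrow> nat \<Rightarrow> bool" where
  "max_through V E s r ord P v i \<longleftrightarrow>
     (\<exists>p. fpath E s r 0 p \<and> p \<noteq> [] \<and> r (last p) = v \<and>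
          (\<forall>j<length p. emax E r ord j (p ! j)) \<and> r (p ! 0) \<in> P 1 i)"

definition min_through :: "(nat \<Rightarrow> 'v set) \<Rightarrow> (nat \<Rightarrow> 'e set) \<Rightarrow> ('e \<Rightarrow> 'v) \<Rightarrow> ('e \<Rightarrow> 'v) \<Rightarrow> 'e rel \<Rightarrow> (nat \<Rightarrow> nat \<Rightarrow> 'v set) \<Rightarrow> 'v \<Rightarrow> nat \<Rightarrow> bool" where
  "min_through V E s r ord P v i \<longleftrightarrow>
     (\<exists>p. fpath E s r 0 p \<and> p \<noteq> [] \<and> r (last p) = v \<and>
          (\<forall>j<length p. emin E r ord j (p ! j)) \<and> r (p ! 0) \<in> P 1 i)"

definition ipath :: "(nat \<Rightarrow> 'e set) \<Rightarrow> ('e \<Rightarrow> 'v) \<Rightarrow> ('e \<Rightarrow> 'v) \<Rightarrow> (nat \<Rightarrow> 'e) \<Rightarrow> bool" where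
  "ipath E s r x \<longleftrightarrow> (\<forall>j. x j \<in> E j \<and> r (x j) = s (x (Suc j)))"

definition Xmax :: "(nat \<Rightarrow> 'e set) \<Rightarrow> ('e \<Rightarrow> 'v) \<Rightarrow> ('e \<Rightarrow> 'v) \<Rightarrow> 'e rel \<Rightarrow> (nat \<Rightarrow> 'e) set" where
  "Xmax E s r ord = {x. ipath E s r x \<and> (\<forall>j. emax E r ord j (x j))}"

definition Xmin :: "(nat \<Rightarrow> 'e set) \<Rightarrow> ('e \<Rightarrow> 'v) \<Rightarrow> ('e \<Rightarrow> 'v) \<Rightarrow> 'e rel \<Rightarrow> (nat \<Rightarrow> 'e) set" where
  "Xmin E s r ord = {x. ipath E s r x \<and> (\<forall>j. emin E r ord j (x j))}"

definition Vo :: "(nat \<Rightarrow> 'v set) \<Rightarrow> (nat \<Rightarrow> nat \<Rightarrow> 'v set) \<Rightarrow> nat \<Rightarrow> nat \<Rightarrow> 'v set" where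
  "Vo V P k n = V n - (\<Union>i\<in>{1..k}. P n i)"

definition k_simple :: "(nat \<Rightarrow> 'v set) \<Rightarrow> (nat \<Rightarrow> 'e set) \<Rightarrow> ('e \<Rightarrow> 'v) \<Rightarrow> ('e \<Rightarrow> 'v) \<Rightarrow> nat \<Rightarrow> (nat \<Rightarrow> nat \<Rightarrow> 'v set) \<Rightarrow> bool" where
  "k_simple V E s r k P \<longleftrightarrow>
     bratteli V E s r \<and>
     (\<forall>n\<ge>1. (\<forall>i\<in>{1..k}. P n i \<subseteq> V n) \<and>
             (\<forall>i\<in>{1..k}. \<forall>j\<in>{1..k}. i \<noteq> j \<longrightarrow> P n i \<inter> P n j = {})) \<and>
     (\<forall>n\<ge>1. \<forall>i\<in>{1..k}. \<forall>v\<in>P (Suc n) i. \<forall>e\<in>E n. r e = v \<longrightarrow> s e \<in> P n i) \<and>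
     (\<forall>n\<ge>1. \<forall>i\<in>{1..k}. \<exists>m>n. \<forall>w\<in>P m i. \<forall>v\<in>P n i. connected E s r n m v w)"

definition non_elementary :: "(nat \<Rightarrow> 'v set) \<Rightarrow> (nat \<Rightarrow> 'e set) \<Rightarrow> ('e \<Rightarrow> 'v) \<Rightarrow> ('e \<Rightarrow> 'v) \<Rightarrow> nat \<Rightarrow> (nat \<Rightarrow> nat \<Rightarrow> 'v set) \<Rightarrow> bool" where
  "non_elementary V E s r k P \<longleftrightarrow>
     (\<forall>n\<ge>1. \<exists>m>n. \<forall>v\<in>Vo V P k n. \<forall>w\<in>Vo V P k m.
        card (paths_between E s r n m v w) = 0 \<or> card (paths_between E s r n m v w) \<ge> 2)"

text \<open>k-simple ordered Bratteli diagram, with the constant L of condition (2) as parameter\<close>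
definition k_simple_ordered :: "(nat \<Rightarrow> 'v set) \<Rightarrow> (nat \<Rightarrow> 'e set) \<Rightarrow> ('e \<Rightarrow> 'v) \<Rightarrow> ('e \<Rightarrow> 'v) \<Rightarrow> 'e rel \<Rightarrow> nat \<Rightarrow> (nat \<Rightarrow> nat \<Rightarrow> 'v set) \<Rightarrow> nat \<Rightarrow> bool" where
  "k_simple_ordered V E s r ord k P L \<longleftrightarrow>
     k_simple V E s r k P \<and> is_order V E r ord \<and>
     (\<exists>zmax zmin.
        (\<forall>i\<in>{1..k}. ipath E s r (zmax i) \<and> ipath E s r (zmin i) \<and>
           (\<forall>n\<ge>1. s (zmax i n) \<in> P n i \<and> s (zmin i n) \<in> P n i)) \<and>
        Xmax E s r ord = zmax ` {1..k} \<and> Xmin E s r ord = zmin ` {1..k}) \<and>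
     (\<forall>n. n \<ge> L \<and> n \<ge> 1 \<longrightarrow> (\<forall>v\<in>Vo V P k n.
        (\<exists>i\<in>{1..k}. max_through V E s r ord P v i) \<and>
        (\<exists>i\<in>{1..k}. min_through V E s r ord P v i))) \<and>
     \<comment> \<open>(3a)\<close>
     (\<forall>n. n \<ge> L \<and> n \<ge> 1 \<longrightarrow> (\<forall>v\<in>Vo V P k n. \<forall>e\<in>E n. s e = v \<longrightarrow>
        (\<forall>p q. p \<noteq> [] \<and> hd p = e \<and> is_succ E s r ord n p q \<longrightarrow>
           (\<exists>i\<in>{1..k}. max_through V E s r ord P v i \<and>
                        min_through V E s r ord P (s (hd q)) i)))) \<and>
     \<comment> \<open>(3b)\<close>
     (\<forall>n\<ge>3. \<forall>v\<in>Vo V P k n. \<forall>e\<in>E (n - 1). r e = v \<and> \<not> emax E r ord (n - 1) e \<longrightarrow>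
        (\<forall>i\<in>{1..k}. s e \<in> P (n - 1) i \<longrightarrow>
           (\<forall>q. is_succ E s r ord (n - 1) [e] q \<longrightarrow>
                 min_through V E s r ord P (s (hd q)) i)))"

text \<open>transition graph L_n: edge v from Y_a to Y_b\<close>
definition tg_edge :: "(nat \<Rightarrow> 'v set) \<Rightarrow> (nat \<Rightarrow> 'e set) \<Rightarrow> ('e \<Rightarrow> 'v) \<Rightarrow> ('e \<Rightarrow> 'v) \<Rightarrow> 'e rel \<Rightarrow> nat \<Rightarrow> (nat \<Rightarrow> nat \<Rightarrow> 'v set) \<Rightarrow> nat \<Rightarrow> 'v \<Rightarrow> nat \<Rightarrow> nat \<Rightarrow> bool" where
  "tg_edge V E s r ord k P n v a b \<longleftrightarrow>
     v \<in> Vo V P k n \<and> a \<in> {1..k} \<and> b \<in> {1..k} \<and>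
     min_through V E s r ord P v a \<and> max_through V E s r ord P v b"

definition tg_walk :: "(nat \<Rightarrow> 'v set) \<Rightarrow> (nat \<Rightarrow> 'e set) \<Rightarrow> ('e \<Rightarrow> 'v) \<Rightarrow> ('e \<Rightarrow> 'v) \<Rightarrow> 'e rel \<Rightarrow> nat \<Rightarrow> (nat \<Rightarrow> nat \<Rightarrow> 'v set) \<Rightarrow> nat \<Rightarrow> 'v list \<Rightarrow> nat \<Rightarrow> nat \<Rightarrow> bool" where
  "tg_walk V E s r ord k P n vs a b \<longleftrightarrow>
     (\<exists>ys. length ys = Suc (length vs) \<and> vs \<noteq> [] \<and> ys ! 0 = a \<and> ys ! length vs = b \<and>
        (\<forall>j<length vs. tg_edge V E s r ord k P n (vs ! j) (ys ! j) (ys ! Suc j)))"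

end

theory Submission
  imports Defs
begin



locale bd =
  fixes V :: "nat \<Rightarrow> 'v set" and E :: "nat \<Rightarrow> 'e set" and s r :: "'e \<Rightarrow> 'v"
    and ord :: "'e rel" and k :: nat and P :: "nat \<Rightarrow> nat \<Rightarrow> 'v set" and L :: nat
  assumes kso: "k_simple_ordered V E s r ord k P L"
begin

lemma ks: "k_simple V E s r k P" using kso unfolding k_simple_ordered_def by blast
lemma br: "bratteli V E s r" using ks unfolding k_simple_def by blast
lemma sE: "e \<in> E l \<Longrightarrow> s e \<in> V l" using br unfolding bratteli_def by blast
lemma rE: "e \<in> E l \<Longrightarrow> r e \<in> V (Suc l)" using br unfolding bratteli_def by blast
lemma Vs: "y \<in> V l \<Longrightarrow> \<exists>e\<in>E l. s e = y" using br unfolding bratteli_def by (metis imageE)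
lemma Vr: "y \<in> V (Suc l) \<Longrightarrow> \<exists>e\<in>E l. r e = y" using br unfolding bratteli_def by (metis imageE)
lemma Vdisj: "y \<in> V l \<Longrightarrow> y \<in> V l' \<Longrightarrow> l = l'" using br unfolding bratteli_def by blast
lemma finV: "finite (V l)" using br unfolding bratteli_def by blast
lemma finE: "finite (E l)" using br unfolding bratteli_def by blast
lemma PV: "l \<ge> 1 \<Longrightarrow> c \<in> {1..k} \<Longrightarrow> P l c \<subseteq> V l" using ks unfolding k_simple_def by blast
lemma Pdisj: "l \<ge> 1 \<Longrightarrow> c \<in> {1..k} \<Longrightarrow> c' \<in> {1..k} \<Longrightarrow> y \<in> P l c \<Longrightarrow> y \<in> P l c' \<Longrightarrow> c = c'"
  using ks unfolding k_simple_def by blast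
lemma Pback: "l \<ge> 1 \<Longrightarrow> c \<in> {1..k} \<Longrightarrow> e \<in> E l \<Longrightarrow> r e \<in> P (Suc l) c \<Longrightarrow> s e \<in> P l c"
  using ks unfolding k_simple_def by blast

lemma isord: "is_order V E r ord" using kso unfolding k_simple_ordered_def by blast

lemma ord_irrefl: "e \<in> E l \<Longrightarrow> (e, e) \<notin> ord"
proof -
  assume e: "e \<in> E l"
  let ?A = "{x \<in> E l. r x = r e}"
  have "strict_linear_order_on ?A (ord \<inter> (?A \<times> ?A))"
    using isord rE[OF e] unfolding is_order_def Let_def by blast
  then show ?thesis using e unfolding strict_linear_order_on_def irrefl_def by blast
qed

lemma ord_total: "e \<in> E l \<Longrightarrow> f \<in> E l \<Longrightarrow> r e = r f \<Longrightarrow> e \<noteq> f \<Longrightarrow> (e, f) \<in> ord \<or> (f, e) \<in> ord"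
proof -
  assume e: "e \<in> E l" and f: "f \<in> E l" "r e = r f" "e \<noteq> f"
  let ?A = "{x \<in> E l. r x = r e}"
  have "strict_linear_order_on ?A (ord \<inter> (?A \<times> ?A))"
    using isord rE[OF e] unfolding is_order_def Let_def by blast
  then have "total_on ?A (ord \<inter> (?A \<times> ?A))" unfolding strict_linear_order_on_def by blast
  moreover have "e \<in> ?A" "f \<in> ?A" using e f by auto
  ultimately show ?thesis using f(3) unfolding total_on_def by blast
qed

lemma ord_trans: "e \<in> E l \<Longrightarrow> f \<in> E l \<Longrightarrow> g \<in> E l \<Longrightarrow> r e = r f \<Longrightarrow> r f = r g \<Longrightarrow>
   (e, f) \<in> ord \<Longrightarrow> (f, g) \<in> ord \<Longrightarrow> (e, g) \<in> ord"
proof -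
  assume e: "e \<in> E l" and f: "f \<in> E l" "g \<in> E l" "r e = r f" "r f = r g" "(e, f) \<in> ord" "(f, g) \<in> ord"
  let ?A = "{x \<in> E l. r x = r e}"
  have "strict_linear_order_on ?A (ord \<inter> (?A \<times> ?A))"
    using isord rE[OF e] unfolding is_order_def Let_def by blast
  then have "trans (ord \<inter> (?A \<times> ?A))" unfolding strict_linear_order_on_def by blast
  moreover have "(e, f) \<in> ord \<inter> (?A \<times> ?A)" "(f, g) \<in> ord \<inter> (?A \<times> ?A)" using e f by auto
  ultimately show ?thesis by (meson IntD1 transD)
qed

end


context bd begin

lemma fpath_Nil[simp]: "fpath E s r l []" unfolding fpath_def by auto
lemma fpath_single[simp]: "fpath E s r l [e] \<longleftrightarrow> e \<in> E l" unfolding fpath_def by auto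

lemma fpath_append:
  "fpath E s r l (a @ b) \<longleftrightarrow> fpath E s r l a \<and> fpath E s r (l + length a) b \<and>
     (a \<noteq> [] \<longrightarrow> b \<noteq> [] \<longrightarrow> r (last a) = s (hd b))"
proof
  assume h: "fpath E s r l (a @ b)"
  have 1: "fpath E s r l a"
    unfolding fpath_def
  proof safe
    fix j assume "j < length a" then show "a ! j \<in> E (l + j)" using h unfolding fpath_def
      by (metis length_append nth_append trans_less_add1)
  next
    fix j assume "Suc j < length a" then show "r (a ! j) = s (a ! Suc j)" using h unfolding fpath_def
      by (metis Suc_lessD length_append nth_append trans_less_add1)
  qed
  have 2: "fpath E s r (l + length a) b"
    unfolding fpath_def
  proof safe
    fix j assume "j < length b" then show "b ! j \<in> E (l + length a + j)" using h unfolding fpath_def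
      by (metis add.assoc length_append nat_add_left_cancel_less nth_append_length_plus)
  next
    fix j assume "Suc j < length b" then show "r (b ! j) = s (b ! Suc j)" using h unfolding fpath_def
      by (metis add_Suc_right length_append nat_add_left_cancel_less nth_append_length_plus)
  qed
  have 3: "a \<noteq> [] \<longrightarrow> b \<noteq> [] \<longrightarrow> r (last a) = s (hd b)"
  proof (intro impI)
    assume "a \<noteq> []" "b \<noteq> []"
    then have "Suc (length a - 1) < length (a @ b)" "(a @ b) ! (length a - 1) = last a"
      "(a @ b) ! Suc (length a - 1) = hd b"
      by (auto simp: nth_append last_conv_nth hd_conv_nth)
    then show "r (last a) = s (hd b)" using h unfolding fpath_def by metis
  qed
  show "fpath E s r l a \<and> fpath E s r (l + length a) b \<and>
     (a \<noteq> [] \<longrightarrow> b \<noteq> [] \<longrightarrow> r (last a) = s (hd b))" using 1 2 3 by blast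
next
  assume h: "fpath E s r l a \<and> fpath E s r (l + length a) b \<and>
     (a \<noteq> [] \<longrightarrow> b \<noteq> [] \<longrightarrow> r (last a) = s (hd b))"
  show "fpath E s r l (a @ b)"
    unfolding fpath_def
  proof safe
    fix j assume j: "j < length (a @ b)"
    show "(a @ b) ! j \<in> E (l + j)"
    proof (cases "j < length a")
      case True then show ?thesis using h unfolding fpath_def by (simp add: nth_append)
    next
      case False
      then have "j - length a < length b" using j by auto
      then show ?thesis using h False unfolding fpath_def by (auto simp: nth_append)
    qed
  next
    fix j assume j: "Suc j < length (a @ b)"
    show "r ((a @ b) ! j) = s ((a @ b) ! Suc j)"
    proof (cases "Suc j < length a")
      case True then show ?thesis using h unfolding fpath_def by (simp add: nth_append)
    next
      case False
      show ?thesis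
      proof (cases "j < length a")
        case True
        then have "j = length a - 1" "a \<noteq> []" "b \<noteq> []" using False j by auto
        then show ?thesis using h True False
          by (auto simp: nth_append last_conv_nth hd_conv_nth)
      next
        case F2: False
        then have "Suc (j - length a) < length b" using j by auto
        then show ?thesis using h F2 False unfolding fpath_def
          by (auto simp: nth_append Suc_diff_le)
      qed
    qed
  qed
qed

lemma fpath_drop: "fpath E s r l p \<Longrightarrow> fpath E s r (l + min i (length p)) (drop i p)"
  using fpath_append[of l "take i p" "drop i p"] by (simp add: min.commute)

lemma fpath_take: "fpath E s r l p \<Longrightarrow> fpath E s r l (take i p)"
  using fpath_append[of l "take i p" "drop i p"] by simp

lemma fpath_nth: "fpath E s r l p \<Longrightarrow> j < length p \<Longrightarrow> p ! j \<in> E (l + j)"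
  unfolding fpath_def by blast
lemma fpath_link: "fpath E s r l p \<Longrightarrow> Suc j < length p \<Longrightarrow> r (p ! j) = s (p ! Suc j)"
  unfolding fpath_def by blast

lemma fpath_last: "fpath E s r l p \<Longrightarrow> p \<noteq> [] \<Longrightarrow> r (last p) \<in> V (l + length p)"
proof -
  assume "fpath E s r l p" "p \<noteq> []"
  then have "last p \<in> E (l + (length p - 1))" by (simp add: fpath_nth last_conv_nth)
  then have "r (last p) \<in> V (Suc (l + (length p - 1)))" by (rule rE)
  moreover have "Suc (l + (length p - 1)) = l + length p" using \<open>p \<noteq> []\<close> by (cases p) auto
  ultimately show ?thesis by metis
qed

lemma fpath_hd: "fpath E s r l p \<Longrightarrow> p \<noteq> [] \<Longrightarrow> s (hd p) \<in> V l"
  by (metis add_0_right fpath_nth hd_conv_nth length_greater_0_conv sE)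

lemma back_path: "y \<in> V (l + j) \<Longrightarrow> \<exists>pre. fpath E s r l pre \<and> length pre = j \<and> (j > 0 \<longrightarrow> r (last pre) = y)"
proof (induction j arbitrary: y)
  case 0 then show ?case by (intro exI[of _ "[]"]) auto
next
  case (Suc j)
  obtain e where e: "e \<in> E (l + j)" "r e = y" using Vr Suc.prems by (metis add_Suc_right)
  obtain pre where pre: "fpath E s r l pre" "length pre = j" "j > 0 \<longrightarrow> r (last pre) = s e"
    using Suc.IH[OF sE[OF e(1)]] by blast
  have "fpath E s r l (pre @ [e])" using pre e by (auto simp: fpath_append)
  then show ?case using pre e by (intro exI[of _ "pre @ [e]"]) auto
qed

lemma fwd_path: "y \<in> V l \<Longrightarrow> \<exists>p. fpath E s r l p \<and> length p = Suc t \<and> s (hd p) = y"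
proof (induction t)
  case 0
  obtain e where "e \<in> E l" "s e = y" using Vs 0 by blast
  then show ?case by (intro exI[of _ "[e]"]) auto
next
  case (Suc t)
  then obtain p where p: "fpath E s r l p" "length p = Suc t" "s (hd p) = y" by blast
  have "r (last p) \<in> V (l + Suc t)" using fpath_last[OF p(1)] p(2) by (metis list.size(3) nat.distinct(1))
  then obtain e where e: "e \<in> E (l + Suc t)" "s e = r (last p)" using Vs by blast
  have "fpath E s r l (p @ [e])" using p e by (auto simp: fpath_append)
  then show ?case using p e by (intro exI[of _ "p @ [e]"]) (auto simp: hd_append)
qed

lemma Pback_nth: "l \<ge> 1 \<Longrightarrow> c \<in> {1..k} \<Longrightarrow> fpath E s r l p \<Longrightarrow> j < length p \<Longrightarrow>
   r (p ! j) \<in> P (l + Suc j) c \<Longrightarrow> s (p ! 0) \<in> P l c"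
proof (induction j)
  case 0 then show ?case using Pback fpath_nth by (metis add_0_right add_Suc_right)
next
  case (Suc j)
  have "s (p ! Suc j) \<in> P (l + Suc j) c"
    using Pback[of "l + Suc j" c "p ! Suc j"] Suc.prems fpath_nth by (metis add_Suc_right le_add1 order_trans)
  then have "r (p ! j) \<in> P (l + Suc j) c" using fpath_link Suc.prems by metis
  then show ?case using Suc by auto
qed

lemma Pback_path: "l \<ge> 1 \<Longrightarrow> c \<in> {1..k} \<Longrightarrow> fpath E s r l p \<Longrightarrow> p \<noteq> [] \<Longrightarrow>
   r (last p) \<in> P (l + length p) c \<Longrightarrow> s (hd p) \<in> P l c"
  using Pback_nth[of l c p "length p - 1"] by (simp add: last_conv_nth hd_conv_nth)

end


context bd begin

definition gthrough :: "(nat \<Rightarrow> 'e \<Rightarrow> bool) \<Rightarrow> 'v \<Rightarrow> nat \<Rightarrow> bool" where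
  "gthrough Q v c \<longleftrightarrow> (\<exists>p. fpath E s r 0 p \<and> p \<noteq> [] \<and> r (last p) = v \<and>
          (\<forall>j<length p. Q j (p ! j)) \<and> r (p ! 0) \<in> P 1 c)"

lemma max_g: "max_through V E s r ord P = gthrough (emax E r ord)"
  unfolding max_through_def gthrough_def by (intro ext) simp
lemma min_g: "min_through V E s r ord P = gthrough (emin E r ord)"
  unfolding min_through_def gthrough_def by (intro ext) simp

definition gl :: "(nat \<Rightarrow> 'e \<Rightarrow> bool) \<Rightarrow> nat \<Rightarrow> 'v \<Rightarrow> nat \<Rightarrow> bool" where
  "gl Q l u a \<longleftrightarrow> a \<in> {1..k} \<and> (gthrough Q u a \<or> u \<in> P l a)"

definition goodQ :: "(nat \<Rightarrow> 'e \<Rightarrow> bool) \<Rightarrow> bool" where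
  "goodQ Q \<longleftrightarrow> (\<forall>l e. Q l e \<longrightarrow> e \<in> E l) \<and> (\<forall>l e e'. Q l e \<longrightarrow> Q l e' \<longrightarrow> r e = r e' \<longrightarrow> e = e')"

lemma good_max: "goodQ (emax E r ord)"
  unfolding goodQ_def
proof (intro conjI allI impI)
  fix l e e' assume "emax E r ord l e" "emax E r ord l e'" "r e = r e'"
  then show "e = e'" unfolding emax_def using ord_total[of e l e'] by metis
qed (simp add: emax_def)
lemma good_min: "goodQ (emin E r ord)"
  unfolding goodQ_def
proof (intro conjI allI impI)
  fix l e e' assume "emin E r ord l e" "emin E r ord l e'" "r e = r e'"
  then show "e = e'" unfolding emin_def using ord_total[of e l e'] by metis
qed (simp add: emin_def)

lemma path0_len: "fpath E s r 0 p \<Longrightarrow> p \<noteq> [] \<Longrightarrow> r (last p) \<in> V l \<Longrightarrow> length p = l"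
  using fpath_last Vdisj by fastforce

lemma gt_base: "gthrough Q v c \<Longrightarrow> v \<in> V 1 \<Longrightarrow> v \<in> P 1 c"
proof -
  assume "gthrough Q v c" "v \<in> V 1"
  then obtain p where p: "fpath E s r 0 p" "p \<noteq> []" "r (last p) = v" "r (p ! 0) \<in> P 1 c"
    unfolding gthrough_def by blast
  then have "length p = 1" using path0_len \<open>v \<in> V 1\<close> by blast
  then have "last p = p ! 0" using p(2) by (simp add: last_conv_nth)
  then show ?thesis using p by simp
qed

lemma gt_dec: "goodQ Q \<Longrightarrow> gthrough Q v c \<Longrightarrow> v \<in> V (Suc l) \<Longrightarrow> l \<ge> 1 \<Longrightarrow>
   \<exists>e\<in>E l. r e = v \<and> Q l e \<and> gthrough Q (s e) c"
proof -
  assume g: "goodQ Q" and "gthrough Q v c" and v: "v \<in> V (Suc l)" and l: "l \<ge> 1"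
  then obtain p where p: "fpath E s r 0 p" "p \<noteq> []" "r (last p) = v" "\<forall>j<length p. Q j (p ! j)"
    "r (p ! 0) \<in> P 1 c" unfolding gthrough_def by blast
  have len: "length p = Suc l" using path0_len p v by blast
  let ?e = "p ! l"
  have last: "last p = ?e" using len p(2) by (simp add: last_conv_nth)
  have Qe: "Q l ?e" using p(4) len by auto
  have eE: "?e \<in> E l" using g Qe unfolding goodQ_def by blast
  let ?p' = "take l p"
  have f': "fpath E s r 0 ?p'" using fpath_take p(1) by blast
  have ne: "?p' \<noteq> []" using l len by auto
  have "last ?p' = ?p' ! (l - 1)" using ne len l by (simp add: last_conv_nth)
  then have "last ?p' = p ! (l - 1)" using l len by simp
  then have "r (last ?p') = s ?e" using fpath_link[OF p(1), of "l - 1"] len l by auto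
  moreover have "\<forall>j<length ?p'. Q j (?p' ! j)" using p(4) by auto
  moreover have "r (?p' ! 0) \<in> P 1 c" using p(5) l by auto
  ultimately have "gthrough Q (s ?e) c" unfolding gthrough_def using f' ne by blast
  then show ?thesis using eE last p(3) Qe by (intro bexI[of _ "?e"]) auto
qed

lemma gt_comp: "goodQ Q \<Longrightarrow> e \<in> E l \<Longrightarrow> l \<ge> 1 \<Longrightarrow> Q l e \<Longrightarrow> gthrough Q (s e) c \<Longrightarrow> gthrough Q (r e) c"
proof -
  assume g: "goodQ Q" and e: "e \<in> E l" and l: "l \<ge> 1" and Qe: "Q l e" and "gthrough Q (s e) c"
  then obtain p where p: "fpath E s r 0 p" "p \<noteq> []" "r (last p) = s e" "\<forall>j<length p. Q j (p ! j)"
    "r (p ! 0) \<in> P 1 c" unfolding gthrough_def by blast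
  have len: "length p = l" using path0_len[OF p(1) p(2)] p(3) sE[OF e] by simp
  have "fpath E s r 0 (p @ [e])" using p e len by (simp add: fpath_append)
  moreover have "\<forall>j<length (p @ [e]). Q j ((p @ [e]) ! j)"
    using p(4) len Qe by (auto simp: nth_append less_Suc_eq)
  moreover have "r ((p @ [e]) ! 0) \<in> P 1 c" using p(5) p(2) by (simp add: nth_append)
  ultimately show ?thesis unfolding gthrough_def by (intro exI[of _ "p @ [e]"]) auto
qed

lemma gt_unique_aux: "goodQ Q \<Longrightarrow> l \<ge> 1 \<longrightarrow> (\<forall>v. v \<in> V l \<longrightarrow> gthrough Q v c \<longrightarrow> gthrough Q v c' \<longrightarrow>
   c \<in> {1..k} \<longrightarrow> c' \<in> {1..k} \<longrightarrow> c = c')"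
proof (induction l)
  case 0 then show ?case by simp
next
  case (Suc l)
  show ?case
  proof (cases "l = 0")
    case True
    show ?thesis
    proof (intro impI allI)
      fix v assume h: "v \<in> V (Suc l)" "gthrough Q v c" "gthrough Q v c'" "c \<in> {1..k}" "c' \<in> {1..k}"
      then have "v \<in> P 1 c" "v \<in> P 1 c'" using gt_base True by auto
      then show "c = c'" using Pdisj h by blast
    qed
  next
    case False
    show ?thesis
    proof (intro impI allI)
      fix v assume h: "v \<in> V (Suc l)" "gthrough Q v c" "gthrough Q v c'" "c \<in> {1..k}" "c' \<in> {1..k}"
      have l: "l \<ge> 1" using False by simp
      obtain e where e: "e \<in> E l" "r e = v" "Q l e" "gthrough Q (s e) c" using gt_dec[of Q v c l] Suc.prems h l by blast
      obtain e' where e': "e' \<in> E l" "r e' = v" "Q l e'" "gthrough Q (s e') c'" using gt_dec[of Q v c' l] Suc.prems h l by blast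
      have "e = e'" using Suc.prems(1) e e' unfolding goodQ_def by blast
      then show "c = c'" using Suc.IH Suc.prems l h e e' sE by blast
    qed
  qed
qed

lemma gt_unique: "goodQ Q \<Longrightarrow> v \<in> V l \<Longrightarrow> l \<ge> 1 \<Longrightarrow> gthrough Q v c \<Longrightarrow> gthrough Q v c' \<Longrightarrow>
   c \<in> {1..k} \<Longrightarrow> c' \<in> {1..k} \<Longrightarrow> c = c'"
  using gt_unique_aux by blast

lemma gt_P_aux: "goodQ Q \<Longrightarrow> l \<ge> 1 \<longrightarrow> (\<forall>v. v \<in> P l a \<longrightarrow> a \<in> {1..k} \<longrightarrow> gthrough Q v c \<longrightarrow> c \<in> {1..k} \<longrightarrow> c = a)"
proof (induction l)
  case 0 then show ?case by simp
next
  case (Suc l)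
  show ?case
  proof (cases "l = 0")
    case True
    show ?thesis
    proof (intro impI allI)
      fix v assume h: "v \<in> P (Suc l) a" "a \<in> {1..k}" "gthrough Q v c" "c \<in> {1..k}"
      then have "v \<in> V 1" using PV True by auto
      then have "v \<in> P 1 c" using gt_base h by blast
      then show "c = a" using Pdisj h True by auto
    qed
  next
    case False
    show ?thesis
    proof (intro impI allI)
      fix v assume h: "v \<in> P (Suc l) a" "a \<in> {1..k}" "gthrough Q v c" "c \<in> {1..k}"
      have l: "l \<ge> 1" using False by simp
      have "v \<in> V (Suc l)" using PV[of "Suc l" a] h by auto
      then obtain e where e: "e \<in> E l" "r e = v" "Q l e" "gthrough Q (s e) c" using gt_dec[of Q v c l] Suc.prems h l by blast
      have "s e \<in> P l a" using Pback[of l a e] h l e by blast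
      then show "c = a" using Suc.IH Suc.prems h l e by blast
    qed
  qed
qed

lemma gt_P: "goodQ Q \<Longrightarrow> v \<in> P l a \<Longrightarrow> l \<ge> 1 \<Longrightarrow> a \<in> {1..k} \<Longrightarrow> gthrough Q v c \<Longrightarrow> c \<in> {1..k} \<Longrightarrow> c = a"
  using gt_P_aux by blast

lemma gl_unique: "goodQ Q \<Longrightarrow> u \<in> V l \<Longrightarrow> l \<ge> 1 \<Longrightarrow> gl Q l u a \<Longrightarrow> gl Q l u b \<Longrightarrow> a = b"
proof -
  assume g: "goodQ Q" and u: "u \<in> V l" and l: "l \<ge> 1" and a: "gl Q l u a" and b: "gl Q l u b"
  have ab: "a \<in> {1..k}" "b \<in> {1..k}" using a b unfolding gl_def by auto
  consider "gthrough Q u a" "gthrough Q u b" | "gthrough Q u a" "u \<in> P l b" | "u \<in> P l a" "gthrough Q u b"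
    | "u \<in> P l a" "u \<in> P l b" using a b unfolding gl_def by blast
  then show ?thesis
  proof cases
    case 1 then show ?thesis using gt_unique[OF g u l] ab by blast
  next
    case 2 then show ?thesis using gt_P[OF g _ l] ab by blast
  next
    case 3 then show ?thesis using gt_P[OF g _ l] ab by (metis (no_types))
  next
    case 4 then show ?thesis using Pdisj[OF l] ab by blast
  qed
qed

lemma gl_back: "goodQ Q \<Longrightarrow> e \<in> E l \<Longrightarrow> l \<ge> 1 \<Longrightarrow> Q l e \<Longrightarrow> gl Q (Suc l) (r e) a \<Longrightarrow> gl Q l (s e) a"
proof -
  assume g: "goodQ Q" and e: "e \<in> E l" and l: "l \<ge> 1" and Qe: "Q l e" and h: "gl Q (Suc l) (r e) a"
  show ?thesis
  proof (cases "r e \<in> P (Suc l) a")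
    case True then show ?thesis using Pback h e l unfolding gl_def by blast
  next
    case False
    then have "gthrough Q (r e) a" using h unfolding gl_def by blast
    then obtain e' where e': "e' \<in> E l" "r e' = r e" "Q l e'" "gthrough Q (s e') a"
      using gt_dec[OF g _ rE[OF e] l] by blast
    have "e' = e" using g e' Qe unfolding goodQ_def by blast
    then show ?thesis using e' h unfolding gl_def by blast
  qed
qed

lemma gl_fwd: "goodQ Q \<Longrightarrow> e \<in> E l \<Longrightarrow> l \<ge> 1 \<Longrightarrow> Q l e \<Longrightarrow> gl Q l (s e) a \<Longrightarrow>
   (r e \<in> Vo V P k (Suc l) \<Longrightarrow> \<exists>c\<in>{1..k}. gthrough Q (r e) c) \<Longrightarrow> gl Q (Suc l) (r e) a"
proof -
  assume g: "goodQ Q" and e: "e \<in> E l" and l: "l \<ge> 1" and Qe: "Q l e" and h: "gl Q l (s e) a"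
    and vo: "r e \<in> Vo V P k (Suc l) \<Longrightarrow> \<exists>c\<in>{1..k}. gthrough Q (r e) c"
  show ?thesis
  proof (cases "r e \<in> Vo V P k (Suc l)")
    case True
    then obtain c where c: "c \<in> {1..k}" "gthrough Q (r e) c" using vo by blast
    then obtain e' where e': "e' \<in> E l" "r e' = r e" "Q l e'" "gthrough Q (s e') c"
      using gt_dec[OF g _ rE[OF e] l] by blast
    have "e' = e" using g e' Qe unfolding goodQ_def by blast
    then have "gl Q l (s e) c" using e' c unfolding gl_def by blast
    then have "c = a" using gl_unique g h sE[OF e] l by blast
    then show ?thesis using c unfolding gl_def by blast
  next
    case False
    then obtain c where c: "c \<in> {1..k}" "r e \<in> P (Suc l) c" using rE[OF e] unfolding Vo_def by blast
    then have "gl Q l (s e) c" using Pback e l unfolding gl_def by blast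
    then have "c = a" using gl_unique g h sE[OF e] l by blast
    then show ?thesis using c unfolding gl_def by blast
  qed
qed

end


context bd begin

lemma common_range: "fpath E s r n p \<Longrightarrow> fpath E s r n q \<Longrightarrow> length q = length p \<Longrightarrow>
   r (last p) = r (last q) \<Longrightarrow> j < length p \<Longrightarrow> (\<forall>i. j < i \<and> i < length p \<longrightarrow> p ! i = q ! i) \<Longrightarrow>
   r (p ! j) = r (q ! j)"
proof -
  assume p: "fpath E s r n p" and q: "fpath E s r n q" and len: "length q = length p"
    and l: "r (last p) = r (last q)" and j: "j < length p" and eq: "\<forall>i. j < i \<and> i < length p \<longrightarrow> p ! i = q ! i"
  show ?thesis
  proof (cases "Suc j < length p")
    case True
    then show ?thesis using fpath_link[OF p True] fpath_link[OF q] eq len by auto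
  next
    case False
    then have "j = length p - 1" using j by auto
    then show ?thesis using l j len by (metis last_conv_nth list.size(3) not_less0)
  qed
qed

lemma plex_irrefl: "fpath E s r n p \<Longrightarrow> \<not> plex ord p p"
  unfolding plex_def using fpath_nth ord_irrefl by blast

lemma plex_idx: "plex ord p q \<Longrightarrow> \<exists>j<length p. (p ! j, q ! j) \<in> ord \<and> (\<forall>i. j < i \<and> i < length p \<longrightarrow> p ! i = q ! i)"
  unfolding plex_def by blast

lemma plex_intro: "length p = length q \<Longrightarrow> j < length p \<Longrightarrow> (p ! j, q ! j) \<in> ord \<Longrightarrow>
   (\<forall>i. j < i \<and> i < length p \<longrightarrow> p ! i = q ! i) \<Longrightarrow> plex ord p q"
  unfolding plex_def by blast

lemma plex_len: "plex ord p q \<Longrightarrow> length p = length q" unfolding plex_def by blast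

lemma plex_trans:
  assumes p: "fpath E s r n p" and q: "fpath E s r n q" and u: "fpath E s r n u"
    and lq: "length q = length p" and lu: "length u = length p"
    and rq: "r (last p) = r (last q)" and ru: "r (last q) = r (last u)"
    and pq: "plex ord p q" and qu: "plex ord q u"
  shows "plex ord p u"
proof -
  obtain j1 where j1: "j1 < length p" "(p ! j1, q ! j1) \<in> ord" "\<forall>i. j1 < i \<and> i < length p \<longrightarrow> p ! i = q ! i"
    using plex_idx[OF pq] by blast
  obtain j2 where j2: "j2 < length p" "(q ! j2, u ! j2) \<in> ord" "\<forall>i. j2 < i \<and> i < length p \<longrightarrow> q ! i = u ! i"
    using plex_idx[OF qu] lq by auto
  consider "j1 < j2" | "j2 < j1" | "j1 = j2" by linarith
  then show ?thesis
  proof cases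
    case 1 then show ?thesis using j1 j2 lu by (intro plex_intro[of _ _ j2]) auto
  next
    case 2 then show ?thesis using j1 j2 lu by (intro plex_intro[of _ _ j1]) auto
  next
    case 3
    have a: "r (p ! j1) = r (q ! j1)" using common_range[OF p q lq rq j1(1) j1(3)] .
    have b: "r (q ! j1) = r (u ! j1)" using common_range[OF q u _ ru] lq lu j2 3 by auto
    have "(p ! j1, u ! j1) \<in> ord"
      using ord_trans[OF fpath_nth[OF p j1(1)] fpath_nth[OF q] fpath_nth[OF u] a b j1(2)] j2 3 lq lu j1 by auto
    then show ?thesis using j1 j2 3 lu by (intro plex_intro[of _ _ j1]) auto
  qed
qed

lemma plex_total:
  assumes p: "fpath E s r n p" and q: "fpath E s r n q" and lq: "length q = length p"
    and rq: "r (last p) = r (last q)" and ne: "p \<noteq> q"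
  shows "plex ord p q \<or> plex ord q p"
proof -
  let ?D = "{i. i < length p \<and> p ! i \<noteq> q ! i}"
  have "?D \<noteq> {}" using ne lq nth_equalityI by (metis (mono_tags, lifting) empty_Collect_eq)
  moreover have "finite ?D" by simp
  ultimately have jD: "Max ?D \<in> ?D" using Max_in by blast
  define j where "j = Max ?D"
  have j: "j < length p" "p ! j \<noteq> q ! j" using jD j_def by auto
  have above: "\<forall>i. j < i \<and> i < length p \<longrightarrow> p ! i = q ! i"
    using Max_ge[OF \<open>finite ?D\<close>] j_def by fastforce
  have "r (p ! j) = r (q ! j)" using common_range[OF p q lq rq j(1) above] .
  then have "(p ! j, q ! j) \<in> ord \<or> (q ! j, p ! j) \<in> ord"
    using ord_total[OF fpath_nth[OF p j(1)] fpath_nth[OF q]] j lq by auto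
  then show ?thesis using j above lq plex_intro by (metis (no_types, lifting))
qed

lemma construct:
  assumes p: "fpath E s r n p" and j: "j < length p" and e': "e' \<in> E (n + j)" and re: "r e' = r (p ! j)"
  shows "\<exists>u. fpath E s r n u \<and> length u = length p \<and> u ! j = e' \<and>
     (\<forall>i. j < i \<and> i < length p \<longrightarrow> u ! i = p ! i) \<and> r (last u) = r (last p)"
proof -
  obtain pre where pre: "fpath E s r n pre" "length pre = j" "j > 0 \<longrightarrow> r (last pre) = s e'"
    using back_path[OF sE[OF e']] by blast
  let ?t = "drop (Suc j) p"
  have ft: "fpath E s r (n + j + 1) ?t" using fpath_drop[OF p, of "Suc j"] j by simp
  have link: "?t \<noteq> [] \<longrightarrow> r e' = s (hd ?t)"
  proof
    assume "?t \<noteq> []"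
    then have "Suc j < length p" by simp
    then show "r e' = s (hd ?t)" using fpath_link[OF p] re by (simp add: hd_drop_conv_nth)
  qed
  have f2: "fpath E s r (n + j) ([e'] @ ?t)" using ft link e' by (subst fpath_append) auto
  let ?u = "pre @ ([e'] @ ?t)"
  have fu: "fpath E s r n ?u" using pre f2 by (subst fpath_append) auto
  have lu: "length ?u = length p" using pre j by simp
  have uj: "?u ! j = e'" using pre by (simp add: nth_append)
  have ui: "\<forall>i. j < i \<and> i < length p \<longrightarrow> ?u ! i = p ! i"
  proof (intro allI impI)
    fix i assume "j < i \<and> i < length p"
    then show "?u ! i = p ! i" using pre by (auto simp: nth_append)
  qed
  have rl: "r (last ?u) = r (last p)"
  proof (cases "Suc j < length p")
    case True
    then have "last ?u = last p" by simp
    then show ?thesis by simp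
  next
    case False
    then have "j = length p - 1" using j by simp
    then have "last p = p ! j" using j by (metis last_conv_nth list.size(3) not_less0)
    moreover have "last ?u = e'" using False by simp
    ultimately show ?thesis using re by simp
  qed
  show ?thesis using fu lu uj ui rl by blast
qed

end


context bd begin

lemma C2: "l \<ge> L \<Longrightarrow> l \<ge> 1 \<Longrightarrow> v \<in> Vo V P k l \<Longrightarrow>
   (\<exists>i\<in>{1..k}. max_through V E s r ord P v i) \<and> (\<exists>i\<in>{1..k}. min_through V E s r ord P v i)"
  using kso unfolding k_simple_ordered_def by blast

lemma C3a: "l \<ge> L \<Longrightarrow> l \<ge> 1 \<Longrightarrow> v \<in> Vo V P k l \<Longrightarrow> e \<in> E l \<Longrightarrow> s e = v \<Longrightarrow> p \<noteq> [] \<Longrightarrow> hd p = e \<Longrightarrow>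
   is_succ E s r ord l p q \<Longrightarrow>
   \<exists>i\<in>{1..k}. max_through V E s r ord P v i \<and> min_through V E s r ord P (s (hd q)) i"
proof -
  assume a: "l \<ge> L" "l \<ge> 1" "v \<in> Vo V P k l" "e \<in> E l" "s e = v" "p \<noteq> []" "hd p = e"
   "is_succ E s r ord l p q"
  have "\<forall>n. n \<ge> L \<and> n \<ge> 1 \<longrightarrow> (\<forall>v\<in>Vo V P k n. \<forall>e\<in>E n. s e = v \<longrightarrow>
        (\<forall>p q. p \<noteq> [] \<and> hd p = e \<and> is_succ E s r ord n p q \<longrightarrow>
           (\<exists>i\<in>{1..k}. max_through V E s r ord P v i \<and>
                        min_through V E s r ord P (s (hd q)) i)))"
    using kso unfolding k_simple_ordered_def by blast
  then show ?thesis using a by blast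
qed

lemma C3b: "l \<ge> 3 \<Longrightarrow> v \<in> Vo V P k l \<Longrightarrow> e \<in> E (l - 1) \<Longrightarrow> r e = v \<Longrightarrow> \<not> emax E r ord (l - 1) e \<Longrightarrow>
   i \<in> {1..k} \<Longrightarrow> s e \<in> P (l - 1) i \<Longrightarrow> is_succ E s r ord (l - 1) [e] q \<Longrightarrow>
   min_through V E s r ord P (s (hd q)) i"
proof -
  assume a: "l \<ge> 3" "v \<in> Vo V P k l" "e \<in> E (l - 1)" "r e = v" "\<not> emax E r ord (l - 1) e"
   "i \<in> {1..k}" "s e \<in> P (l - 1) i" "is_succ E s r ord (l - 1) [e] q"
  have "\<forall>n\<ge>3. \<forall>v\<in>Vo V P k n. \<forall>e\<in>E (n - 1). r e = v \<and> \<not> emax E r ord (n - 1) e \<longrightarrow>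
        (\<forall>i\<in>{1..k}. s e \<in> P (n - 1) i \<longrightarrow>
           (\<forall>q. is_succ E s r ord (n - 1) [e] q \<longrightarrow>
                 min_through V E s r ord P (s (hd q)) i))"
    using kso unfolding k_simple_ordered_def by blast
  then show ?thesis using a by blast
qed

lemma succ_noU: "is_succ E s r ord n p q \<Longrightarrow> fpath E s r n u \<Longrightarrow> length u = length p \<Longrightarrow>
   r (last u) = r (last p) \<Longrightarrow> plex ord p u \<Longrightarrow> plex ord u q \<Longrightarrow> False"
  unfolding is_succ_def by blast

lemma succ_E1:
  assumes sc: "is_succ E s r ord n p q" and k0: "k0 < length p" "(p ! k0, q ! k0) \<in> ord"
    "\<forall>i. k0 < i \<and> i < length p \<longrightarrow> p ! i = q ! i" and j: "j < k0"
  shows "emax E r ord (n + j) (p ! j)"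
proof (rule ccontr)
  assume ne: "\<not> emax E r ord (n + j) (p ! j)"
  have p: "fpath E s r n p" and lq: "length q = length p" using sc unfolding is_succ_def by auto
  have jl: "j < length p" using j k0 by simp
  have pj: "p ! j \<in> E (n + j)" using fpath_nth[OF p jl] .
  then obtain e' where e': "e' \<in> E (n + j)" "r e' = r (p ! j)" "(p ! j, e') \<in> ord"
    using ne unfolding emax_def by blast
  obtain u where u: "fpath E s r n u" "length u = length p" "u ! j = e'"
     "\<forall>i. j < i \<and> i < length p \<longrightarrow> u ! i = p ! i" "r (last u) = r (last p)"
    using construct[OF p jl e'(1) e'(2)] by blast
  have "plex ord p u" using u e' jl by (intro plex_intro[of _ _ j]) auto
  moreover have "plex ord u q" using u k0 j lq by (intro plex_intro[of _ _ k0]) auto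
  ultimately show False using succ_noU[OF sc u(1) u(2) u(5)] by blast
qed

lemma succ_E2:
  assumes sc: "is_succ E s r ord n p q" and k0: "k0 < length p" "(p ! k0, q ! k0) \<in> ord"
    "\<forall>i. k0 < i \<and> i < length p \<longrightarrow> p ! i = q ! i" and j: "j < k0"
  shows "emin E r ord (n + j) (q ! j)"
proof (rule ccontr)
  assume ne: "\<not> emin E r ord (n + j) (q ! j)"
  have q: "fpath E s r n q" and lq: "length q = length p" and rl: "r (last q) = r (last p)"
    using sc unfolding is_succ_def by auto
  have jl: "j < length q" using j k0 lq by simp
  have qj: "q ! j \<in> E (n + j)" using fpath_nth[OF q jl] .
  then obtain e' where e': "e' \<in> E (n + j)" "r e' = r (q ! j)" "(e', q ! j) \<in> ord"
    using ne unfolding emin_def by blast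
  obtain u where u: "fpath E s r n u" "length u = length q" "u ! j = e'"
     "\<forall>i. j < i \<and> i < length q \<longrightarrow> u ! i = q ! i" "r (last u) = r (last q)"
    using construct[OF q jl e'(1) e'(2)] by blast
  have "plex ord p u" using u k0 j lq by (intro plex_intro[of _ _ k0]) auto
  moreover have "plex ord u q" using u e' jl by (intro plex_intro[of _ _ j]) auto
  ultimately show False using succ_noU[OF sc u(1)] u lq rl by auto
qed

lemma succ_E3:
  assumes sc: "is_succ E s r ord n p q" and k0: "k0 < length p" "(p ! k0, q ! k0) \<in> ord"
    "\<forall>i. k0 < i \<and> i < length p \<longrightarrow> p ! i = q ! i"
  shows "is_succ E s r ord (n + k0) [p ! k0] [q ! k0]"
proof -
  have p: "fpath E s r n p" and q: "fpath E s r n q" and lq: "length q = length p"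
    and rl: "r (last q) = r (last p)" using sc unfolding is_succ_def by auto
  have pk: "p ! k0 \<in> E (n + k0)" using fpath_nth[OF p k0(1)] .
  have qk: "q ! k0 \<in> E (n + k0)" using fpath_nth[OF q] k0(1) lq by simp
  have cr: "r (p ! k0) = r (q ! k0)" using common_range[OF p q lq rl[symmetric] k0(1) k0(3)] .
  have nou: "\<not> (\<exists>u. fpath E s r (n + k0) u \<and> length u = length [p ! k0] \<and> r (last u) = r (last [p ! k0]) \<and>
            plex ord [p ! k0] u \<and> plex ord u [q ! k0])"
  proof
    assume "\<exists>u. fpath E s r (n + k0) u \<and> length u = length [p ! k0] \<and> r (last u) = r (last [p ! k0]) \<and>
            plex ord [p ! k0] u \<and> plex ord u [q ! k0]"
    then obtain u where u: "fpath E s r (n + k0) u" "length u = 1" "r (last u) = r (p ! k0)"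
      "plex ord [p ! k0] u" "plex ord u [q ! k0]" by auto
    have g: "u ! 0 \<in> E (n + k0)" using fpath_nth[OF u(1)] u(2) by simp
    have rg: "r (u ! 0) = r (p ! k0)" using u(2,3) by (metis One_nat_def diff_Suc_1 last_conv_nth list.size(3) zero_neq_one)
    have o1: "(p ! k0, u ! 0) \<in> ord" using plex_idx[OF u(4)] by auto
    have o2: "(u ! 0, q ! k0) \<in> ord" using plex_idx[OF u(5)] u(2) by auto
    obtain w where w: "fpath E s r n w" "length w = length p" "w ! k0 = u ! 0"
      "\<forall>i. k0 < i \<and> i < length p \<longrightarrow> w ! i = p ! i" "r (last w) = r (last p)"
      using construct[OF p k0(1) g rg] by blast
    have "plex ord p w" using w o1 k0 by (intro plex_intro[of _ _ k0]) auto
    moreover have "plex ord w q" using w o2 k0 lq by (intro plex_intro[of _ _ k0]) auto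
    ultimately show False using succ_noU[OF sc w(1) w(2) w(5)] by blast
  qed
  show ?thesis unfolding is_succ_def
    using pk qk cr k0(2) nou by (auto intro: plex_intro[of _ _ 0])
qed

end


context bd begin

abbreviation "hi \<equiv> gl (emax E r ord)"
abbreviation "lo \<equiv> gl (emin E r ord)"

lemma keyK:
  assumes n: "n \<ge> 2" "n \<ge> L" and sc: "is_succ E s r ord n p q"
    and ha: "hi n (s (hd p)) a" and hb: "lo n (s (hd q)) b"
  shows "a = b"
proof -
  have p: "fpath E s r n p" and q: "fpath E s r n q" and lq: "length q = length p"
    and rl: "r (last q) = r (last p)" and pne: "p \<noteq> []" and pq: "plex ord p q"
    using sc unfolding is_succ_def by auto
  obtain k0 where k0: "k0 < length p" "(p ! k0, q ! k0) \<in> ord" "\<forall>i. k0 < i \<and> i < length p \<longrightarrow> p ! i = q ! i"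
    using plex_idx[OF pq] by blast
  have n1: "n \<ge> 1" using n by simp
  have step1: "\<forall>j\<le>k0. hi (n + j) (s (p ! j)) a"
  proof (intro allI impI)
    fix j assume "j \<le> k0"
    then show "hi (n + j) (s (p ! j)) a"
    proof (induction j)
      case 0 then show ?case using ha pne by (simp add: hd_conv_nth)
    next
      case (Suc j)
      have jk: "j < k0" using Suc by simp
      have em: "emax E r ord (n + j) (p ! j)" using succ_E1[OF sc k0 jk] .
      have pj: "p ! j \<in> E (n + j)" using fpath_nth[OF p] jk k0 by simp
      have "hi (Suc (n + j)) (r (p ! j)) a"
      proof (rule gl_fwd[OF good_max pj _ em])
        show "1 \<le> n + j" using n1 by simp
        show "hi (n + j) (s (p ! j)) a" using Suc by simp
        assume "r (p ! j) \<in> Vo V P k (Suc (n + j))"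
        then show "\<exists>c\<in>{1..k}. gthrough (emax E r ord) (r (p ! j)) c"
          using C2[of "Suc (n + j)"] n max_g by auto
      qed
      moreover have "r (p ! j) = s (p ! Suc j)" using fpath_link[OF p] Suc k0 by simp
      ultimately show ?case by simp
    qed
  qed
  define l where "l = n + k0"
  define e where "e = p ! k0"
  define f where "f = q ! k0"
  have eE: "e \<in> E l" using fpath_nth[OF p k0(1)] e_def l_def by simp
  have fE: "f \<in> E l" using fpath_nth[OF q] k0(1) lq f_def l_def by simp
  have cr: "r e = r f" using common_range[OF p q lq rl[symmetric] k0(1) k0(3)] e_def f_def by simp
  have ef: "(e, f) \<in> ord" using k0 e_def f_def by simp
  have l1: "l \<ge> 1" "l \<ge> L" using n l_def by auto
  have hie: "hi l (s e) a" using step1 l_def e_def by simp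
  have sc1: "is_succ E s r ord l [e] [f]" using succ_E3[OF sc k0] l_def e_def f_def by simp
  have a1: "a \<in> {1..k}" using ha unfolding gl_def by blast
  have step2: "lo l (s f) a"
  proof (cases "r e \<in> Vo V P k (Suc l)")
    case False
    then obtain c where c: "c \<in> {1..k}" "r e \<in> P (Suc l) c" using rE[OF eE] unfolding Vo_def by blast
    have "s e \<in> P l c" using Pback[OF l1(1) c(1) eE c(2)] .
    then have "hi l (s e) c" using c unfolding gl_def by blast
    then have "c = a" using gl_unique[OF good_max sE[OF eE] l1(1) _ hie] by blast
    moreover have "s f \<in> P l c" using Pback[OF l1(1) c(1) fE] c(2) cr by simp
    ultimately show ?thesis using c unfolding gl_def by blast
  next
    case xVo: True
    show ?thesis
    proof (cases "s e \<in> Vo V P k l")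
      case True
      obtain c where c: "c \<in> {1..k}" "max_through V E s r ord P (s e) c" "min_through V E s r ord P (s (hd [f])) c"
        using C3a[OF l1(2) l1(1) True eE refl _ _ sc1] by auto
      have "hi l (s e) c" using c max_g unfolding gl_def by simp
      then have "c = a" using gl_unique[OF good_max sE[OF eE] l1(1) _ hie] by blast
      then show ?thesis using c min_g unfolding gl_def by simp
    next
      case False
      then obtain c where c: "c \<in> {1..k}" "s e \<in> P l c" using sE[OF eE] unfolding Vo_def by blast
      then have "hi l (s e) c" unfolding gl_def by blast
      then have ca: "c = a" using gl_unique[OF good_max sE[OF eE] l1(1) _ hie] by blast
      have nem: "\<not> emax E r ord l e" using fE cr ef unfolding emax_def by auto
      have "min_through V E s r ord P (s (hd [f])) a"
        using C3b[of "Suc l" "r e" e a "[f]"] xVo eE nem c ca sc1 l_def n by auto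
      then show ?thesis using a1 min_g unfolding gl_def by simp
    qed
  qed
  have step3: "\<forall>j\<le>k0. lo (n + (k0 - j)) (s (q ! (k0 - j))) a"
  proof (intro allI impI)
    fix j assume "j \<le> k0"
    then show "lo (n + (k0 - j)) (s (q ! (k0 - j))) a"
    proof (induction j)
      case 0 then show ?case using step2 l_def f_def by simp
    next
      case (Suc j)
      define i where "i = k0 - Suc j"
      have ik: "i < k0" using Suc i_def by simp
      have si: "Suc i = k0 - j" using Suc i_def by simp
      have em: "emin E r ord (n + i) (q ! i)" using succ_E2[OF sc k0 ik] .
      have qi: "q ! i \<in> E (n + i)" using fpath_nth[OF q] ik k0 lq by simp
      have "r (q ! i) = s (q ! Suc i)" using fpath_link[OF q] ik k0 lq by simp
      moreover have "Suc (n + i) = n + (k0 - j)" using si by simp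
      moreover have "lo (n + (k0 - j)) (s (q ! (k0 - j))) a" using Suc by simp
      ultimately have "lo (Suc (n + i)) (r (q ! i)) a" using si by metis
      then have "lo (n + i) (s (q ! i)) a" using gl_back[OF good_min qi _ em] n1 by simp
      then show ?case using i_def by simp
    qed
  qed
  then have "lo (n + (k0 - k0)) (s (q ! (k0 - k0))) a" by blast
  moreover have "hd q = q ! 0" using lq pne by (cases q) auto
  ultimately have loa: "lo n (s (hd q)) a" by simp
  have qne: "q \<noteq> []" using lq pne by auto
  have "s (hd q) \<in> V n" using fpath_hd[OF q qne] .
  from gl_unique[OF good_min this n1 loa hb] show ?thesis .
qed

end


context bd begin

definition Rn :: "nat \<Rightarrow> nat \<Rightarrow> nat \<Rightarrow> bool" where
  "Rn n a b \<longleftrightarrow> (\<exists>v. tg_edge V E s r ord k P n v a b)"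

definition Sset :: "nat \<Rightarrow> nat \<Rightarrow> 'v \<Rightarrow> 'e list set" where
  "Sset n d w = {p. fpath E s r n p \<and> length p = d \<and> r (last p) = w}"

lemma Sset_finite: "finite (Sset n d w)"
proof -
  have "Sset n d w \<subseteq> {xs. set xs \<subseteq> (\<Union>j<d. E (n + j)) \<and> length xs = d}"
  proof
    fix p assume "p \<in> Sset n d w"
    then have p: "fpath E s r n p" "length p = d" unfolding Sset_def by auto
    have "set p \<subseteq> (\<Union>j<d. E (n + j))"
    proof
      fix x assume "x \<in> set p"
      then obtain j where "j < length p" "p ! j = x" by (meson in_set_conv_nth)
      then show "x \<in> (\<Union>j<d. E (n + j))" using fpath_nth[OF p(1)] p(2) by blast
    qed
    then show "p \<in> {xs. set xs \<subseteq> (\<Union>j<d. E (n + j)) \<and> length xs = d}" using p by simp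
  qed
  moreover have "finite {xs. set xs \<subseteq> (\<Union>j<d. E (n + j)) \<and> length xs = d}"
    by (rule finite_lists_length_eq) (simp add: finE)
  ultimately show ?thesis by (rule finite_subset)
qed

lemma vertex_step: "n \<ge> 1 \<Longrightarrow> n \<ge> L \<Longrightarrow> u \<in> V n \<Longrightarrow> \<exists>c d. lo n u c \<and> hi n u d \<and> (Rn n)\<^sup>*\<^sup>* c d"
proof -
  assume n: "n \<ge> 1" "n \<ge> L" and u: "u \<in> V n"
  show ?thesis
  proof (cases "u \<in> Vo V P k n")
    case True
    obtain d where d: "d \<in> {1..k}" "max_through V E s r ord P u d" using C2[OF n(2) n(1) True] by blast
    obtain c where c: "c \<in> {1..k}" "min_through V E s r ord P u c" using C2[OF n(2) n(1) True] by blast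
    have "Rn n c d" unfolding Rn_def tg_edge_def using True c d by blast
    then show ?thesis using c d max_g min_g unfolding gl_def by auto
  next
    case False
    then obtain c where "c \<in> {1..k}" "u \<in> P n c" using u unfolding Vo_def by blast
    then show ?thesis unfolding gl_def by blast
  qed
qed

lemma main_ind:
  assumes n: "n \<ge> 2" "n \<ge> L" and d: "d \<ge> 1"
  shows "\<forall>p q. p \<in> Sset n d w \<longrightarrow> q \<in> Sset n d w \<longrightarrow> plex ord p q \<longrightarrow>
     card {u \<in> Sset n d w. plex ord p u \<and> plex ord u q} = N \<longrightarrow>
     (\<forall>a b. hi n (s (hd p)) a \<longrightarrow> lo n (s (hd q)) b \<longrightarrow> (Rn n)\<^sup>*\<^sup>* a b)"
proof (induction N rule: less_induct)
  case (less N)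
  show ?case
  proof (intro allI impI)
    fix p q a b
    assume pS: "p \<in> Sset n d w" and qS: "q \<in> Sset n d w" and pq: "plex ord p q"
      and N: "card {u \<in> Sset n d w. plex ord p u \<and> plex ord u q} = N"
      and ha: "hi n (s (hd p)) a" and hb: "lo n (s (hd q)) b"
    have p: "fpath E s r n p" "length p = d" "r (last p) = w" using pS unfolding Sset_def by auto
    have q: "fpath E s r n q" "length q = d" "r (last q) = w" using qS unfolding Sset_def by auto
    let ?B = "{u \<in> Sset n d w. plex ord p u \<and> plex ord u q}"
    have finB: "finite ?B" using Sset_finite by simp
    show "(Rn n)\<^sup>*\<^sup>* a b"
    proof (cases "?B = {}")
      case True
      have "is_succ E s r ord n p q"
        unfolding is_succ_def
      proof (intro conjI)
        show "p \<noteq> []" using p(2) d by auto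
        show "\<not> (\<exists>u. fpath E s r n u \<and> length u = length p \<and> r (last u) = r (last p) \<and>
            plex ord p u \<and> plex ord u q)" using True p unfolding Sset_def by auto
      qed (use p q pq in auto)
      then have "a = b" using keyK[OF n _ ha hb] by blast
      then show ?thesis by simp
    next
      case False
      then obtain u where uB: "u \<in> ?B" by blast
      then have uS: "u \<in> Sset n d w" and pu: "plex ord p u" and uq: "plex ord u q" by auto
      have u: "fpath E s r n u" "length u = d" "r (last u) = w" using uS unfolding Sset_def by auto
      have une: "u \<noteq> []" using u(2) d by auto
      obtain c d' where cd: "lo n (s (hd u)) c" "hi n (s (hd u)) d'" "(Rn n)\<^sup>*\<^sup>* c d'"
        using vertex_step[of n "s (hd u)"] n fpath_hd[OF u(1) une] by auto
      have sub1: "{x \<in> Sset n d w. plex ord p x \<and> plex ord x u} \<subset> ?B"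
      proof
        show "{x \<in> Sset n d w. plex ord p x \<and> plex ord x u} \<subseteq> ?B"
        proof
          fix x assume x: "x \<in> {x \<in> Sset n d w. plex ord p x \<and> plex ord x u}"
          then have "fpath E s r n x" "length x = d" "r (last x) = w" unfolding Sset_def by auto
          then have "plex ord x q" using plex_trans[of n x u q] x u q uq by auto
          then show "x \<in> ?B" using x by auto
        qed
        show "{x \<in> Sset n d w. plex ord p x \<and> plex ord x u} \<noteq> ?B"
          using uB plex_irrefl[OF u(1)] by blast
      qed
      have sub2: "{x \<in> Sset n d w. plex ord u x \<and> plex ord x q} \<subset> ?B"
      proof
        show "{x \<in> Sset n d w. plex ord u x \<and> plex ord x q} \<subseteq> ?B"
        proof
          fix x assume x: "x \<in> {x \<in> Sset n d w. plex ord u x \<and> plex ord x q}"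
          then have "fpath E s r n x" "length x = d" "r (last x) = w" unfolding Sset_def by auto
          then have "plex ord p x" using plex_trans[of n p u x] x u p pu by auto
          then show "x \<in> ?B" using x by auto
        qed
        show "{x \<in> Sset n d w. plex ord u x \<and> plex ord x q} \<noteq> ?B"
          using uB plex_irrefl[OF u(1)] by blast
      qed
      have c1: "card {x \<in> Sset n d w. plex ord p x \<and> plex ord x u} < N"
        using psubset_card_mono[OF finB sub1] N by simp
      have c2: "card {x \<in> Sset n d w. plex ord u x \<and> plex ord x q} < N"
        using psubset_card_mono[OF finB sub2] N by simp
      have r1: "(Rn n)\<^sup>*\<^sup>* a c" using less.IH[OF c1] pS uS pu ha cd(1) by blast
      have r2: "(Rn n)\<^sup>*\<^sup>* d' b" using less.IH[OF c2] uS qS uq hb cd(2) by blast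
      show ?thesis using r1 cd(3) r2 by (meson rtranclp_trans)
    qed
  qed
qed

lemma walk_of: "(Rn n)\<^sup>*\<^sup>* a b \<Longrightarrow> \<exists>vs ys. length ys = Suc (length vs) \<and> ys ! 0 = a \<and> ys ! length vs = b \<and>
   (\<forall>t<length vs. tg_edge V E s r ord k P n (vs ! t) (ys ! t) (ys ! Suc t))"
proof (induction rule: converse_rtranclp_induct)
  case base
  then show ?case by (intro exI[of _ "[]"] exI[of _ "[b]"]) auto
next
  case (step a a')
  then obtain vs ys where w: "length ys = Suc (length vs)" "ys ! 0 = a'" "ys ! length vs = b"
    "\<forall>t<length vs. tg_edge V E s r ord k P n (vs ! t) (ys ! t) (ys ! Suc t)" by blast
  obtain v where v: "tg_edge V E s r ord k P n v a a'" using step(1) unfolding Rn_def by blast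
  show ?case
  proof (intro exI[of _ "v # vs"] exI[of _ "a # ys"] conjI)
    show "\<forall>t<length (v # vs). tg_edge V E s r ord k P n ((v # vs) ! t) ((a # ys) ! t) ((a # ys) ! Suc t)"
    proof (intro allI impI)
      fix t assume "t < length (v # vs)"
      then show "tg_edge V E s r ord k P n ((v # vs) ! t) ((a # ys) ! t) ((a # ys) ! Suc t)"
        using v w by (cases t) auto
    qed
  qed (use w in auto)
qed

end



theorem corollary7p4:
  fixes V :: "nat \<Rightarrow> 'v set" and E :: "nat \<Rightarrow> 'e set" and s r :: "'e \<Rightarrow> 'v"
    and ord :: "'e rel" and k :: nat and P :: "nat \<Rightarrow> nat \<Rightarrow> 'v set" and L n :: nat
    and v1 :: 'v and i j :: nat
  assumes "k \<ge> 2"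
    and "k_simple_ordered V E s r ord k P L"
    and "non_elementary V E s r k P"
    and "n \<ge> max 2 L"
    and "tg_edge V E s r ord k P n v1 i j"
  shows "\<exists>vs. hd vs = v1 \<and> tg_walk V E s r ord k P n vs i i"
proof -
  interpret bd V E s r ord k P L using assms(2) by (rule bd.intro)
  have n: "n \<ge> 2" "n \<ge> L" using assms(4) by auto
  have n1: "n \<ge> 1" using n by simp
  have te: "v1 \<in> Vo V P k n" "i \<in> {1..k}" "j \<in> {1..k}" "min_through V E s r ord P v1 i"
    "max_through V E s r ord P v1 j" using assms(5) unfolding tg_edge_def by auto
  obtain m where m: "m > n" and mprop: "\<forall>v\<in>Vo V P k n. \<forall>w\<in>Vo V P k m.
        card (paths_between E s r n m v w) = 0 \<or> card (paths_between E s r n m v w) \<ge> 2"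
    using assms(3) n1 unfolding non_elementary_def by blast
  have v1V: "v1 \<in> V n" using te(1) unfolding Vo_def by blast
  obtain p0 where p0: "fpath E s r n p0" "length p0 = Suc (m - n - 1)" "s (hd p0) = v1"
    using fwd_path[OF v1V] by blast
  have lp0: "length p0 = m - n" using p0(2) m by simp
  have p0ne: "p0 \<noteq> []" using p0(2) by auto
  define w where "w = r (last p0)"
  have wV: "w \<in> V m" using fpath_last[OF p0(1) p0ne] lp0 m w_def by simp
  have wVo: "w \<in> Vo V P k m"
  proof (rule ccontr)
    assume "w \<notin> Vo V P k m"
    then obtain c where c: "c \<in> {1..k}" "w \<in> P m c" using wV unfolding Vo_def by blast
    have "r (last p0) \<in> P (n + length p0) c" using c lp0 m w_def by simp
    then have "s (hd p0) \<in> P n c" using Pback_path[OF n1 c(1) p0(1) p0ne] by blast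
    then show False using te(1) p0(3) c(1) unfolding Vo_def by blast
  qed
  let ?PB = "paths_between E s r n m v1 w"
  have PBS: "?PB \<subseteq> Sset n (m - n) w" unfolding paths_between_def Sset_def by auto
  have finPB: "finite ?PB" using finite_subset[OF PBS Sset_finite] .
  have p0PB: "p0 \<in> ?PB" unfolding paths_between_def using p0 lp0 p0ne w_def by auto
  have "card ?PB \<noteq> 0" using finPB p0PB by auto
  then have c2: "card ?PB \<ge> 2" using mprop[rule_format, OF te(1) wVo] by linarith
  have "card (?PB - {p0}) \<ge> 1" using c2 finPB p0PB by simp
  then have "?PB - {p0} \<noteq> {}" by (metis card.empty not_one_le_zero)
  then obtain p1 where p1: "p1 \<in> ?PB" "p1 \<noteq> p0" by blast
  have p1f: "fpath E s r n p1" "length p1 = m - n" "r (last p1) = w" "s (hd p1) = v1"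
    using p1(1) unfolding paths_between_def by auto
  obtain pa pb where ab: "pa \<in> Sset n (m - n) w" "pb \<in> Sset n (m - n) w" "plex ord pa pb"
    "s (hd pa) = v1" "s (hd pb) = v1"
  proof -
    have "plex ord p0 p1 \<or> plex ord p1 p0"
      using plex_total[OF p0(1) p1f(1)] p1f lp0 w_def p1(2) by auto
    then show ?thesis using that p0PB p1 PBS p0(3) p1f(4) by blast
  qed
  have hj: "hi n (s (hd pa)) j" using te ab max_g unfolding gl_def by simp
  have li: "lo n (s (hd pb)) i" using te ab min_g unfolding gl_def by simp
  have "(Rn n)\<^sup>*\<^sup>* j i"
    using main_ind[OF n, of "m - n" w] m ab hj li by auto
  then obtain vs ys where w: "length ys = Suc (length vs)" "ys ! 0 = j" "ys ! length vs = i"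
    "\<forall>t<length vs. tg_edge V E s r ord k P n (vs ! t) (ys ! t) (ys ! Suc t)"
    using walk_of by blast
  have "tg_walk V E s r ord k P n (v1 # vs) i i"
    unfolding tg_walk_def
  proof (intro exI[of _ "i # ys"] conjI)
    show "\<forall>t<length (v1 # vs). tg_edge V E s r ord k P n ((v1 # vs) ! t) ((i # ys) ! t) ((i # ys) ! Suc t)"
    proof (intro allI impI)
      fix t assume "t < length (v1 # vs)"
      then show "tg_edge V E s r ord k P n ((v1 # vs) ! t) ((i # ys) ! t) ((i # ys) ! Suc t)"
        using w assms(5) by (cases t) auto
    qed
  qed (use w in auto)
  then show ?thesis by (intro exI[of _ "v1 # vs"]) simp
qed

end
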